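(* Let $\epsilon > 0$, and fix integers $k \ge 2$ and $n > k$. Consider the randomized algorithm $\mathcal{A}$ which, on input a database $D$ of $n$ rows, does the following. It draws independent $Z_1 \sim \mathrm{Lap}\!\left(\frac{9 + 5/n}{\epsilon/2}\right)$ and $Z_2 \sim \mathrm{Lap}\!\left(\frac{7}{\epsilon/2}\right)$. It sets $\widehat{\mathrm{SSA}} = \mathrm{SSA}(D) + Z_1$, $\widehat{\mathrm{SSE}} = \mathrm{SSE}(D) + Z_2$, and $\widehat F = \frac{\widehat{\mathrm{SSA}}/(k-1)}{\widehat{\mathrm{SSE}}/(n-k)}$. It outputs the triple $(\widehat F, \widehat{\mathrm{SSA}}, \widehat{\mathrm{SSE}})$. Then $\mathcal{A}$ is $\epsilon$-differentially private.
   Context: A database $D$ consists of $n$ rows. Each row is a pair $(g, y)$ with group label $g \in \{1,\dots,k\}$ and response $y \in [0,1]$. Let $n_i$ be the number of rows in group $i$, with responses $y_{i1},\dots,y_{in_i}$ and group mean $\overline{y}_i$. Let $\overline{y}$ be the mean of all responses; empty groups contribute nothing. Define $\mathrm{SSA}(D) = \sum_{i=1}^k n_i(\overline{y}_i - \overline{y})^2$ and $\mathrm{SSE}(D) = \sum_{i=1}^k\sum_{j=1}^{n_i}(y_{ij}-\overline{y}_i)^2$. $\mathrm{Lap}(b)$ denotes the Laplace distribution with density $e^{-|x|/b}/(2b)$ on $\mathbb{R}$. The output $\widehat F$ is well defined almost surely, since $\widehat{\mathrm{SSE}} \neq 0$ with probability $1$. Two databases with $n$ rows each are neighboring if they differ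 in exactly one row; both the label and the response of that row may change. A randomized algorithm $f$ with range $R$ is $\epsilon$-differentially private if $\Pr[f(D)\in S] \le e^{\epsilon}\Pr[f(D')\in S]$ for all neighboring $D, D'$ and all measurable $S \subseteq R$. *)

theory Defs
  imports "HOL-Probability.Probability"
begin

text \<open>A database is a list of rows (g, y): group label g and response y.\<close>
type_synonym database = "(nat \<times> real) list"

definition valid_db :: "nat \<Rightarrow> nat \<Rightarrow> database \<Rightarrow> bool" where
  "valid_db k n D \<longleftrightarrow> length D = n \<and>
     (\<forall>r \<in> set D. fst r \<in> {1..k} \<and> snd r \<in> {0..1})"

definition neighboring :: "database \<Rightarrow> database \<Rightarrow> bool" where
  "neighboring D D' \<longleftrightarrow> length D = length D' \<and>
     card {j. j < length D \<and> D ! j \<noteq> D' ! j} = 1"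

definition group_count :: "database \<Rightarrow> nat \<Rightarrow> nat" where
  "group_count D i = length (filter (\<lambda>r. fst r = i) D)"

definition group_mean :: "database \<Rightarrow> nat \<Rightarrow> real" where
  "group_mean D i = sum_list (map snd (filter (\<lambda>r. fst r = i) D)) / real (group_count D i)"

definition grand_mean :: "database \<Rightarrow> real" where
  "grand_mean D = sum_list (map snd D) / real (length D)"

definition SSA :: "nat \<Rightarrow> database \<Rightarrow> real" where
  "SSA k D = (\<Sum>i=1..k. real (group_count D i) * (group_mean D i - grand_mean D)^2)"

definition SSE :: "nat \<Rightarrow> database \<Rightarrow> real" where
  "SSE k D = (\<Sum>i=1..k. sum_list (map (\<lambda>r. (snd r - group_mean D i)^2)
                                         (filter (\<lambda>r. fst r = i) D)))"

definition laplace_density :: "real \<Rightarrow> real \<Rightarrow> real" where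
  "laplace_density b x = exp (- \<bar>x\<bar> / b) / (2 * b)"

definition Lap :: "real \<Rightarrow> real measure" where
  "Lap b = density lborel (\<lambda>x. ennreal (laplace_density b x))"

definition anova_mech :: "real \<Rightarrow> nat \<Rightarrow> nat \<Rightarrow> database \<Rightarrow> (real \<times> real \<times> real) measure" where
  "anova_mech \<epsilon> k n D =
     distr (Lap ((9 + 5 / real n) / (\<epsilon> / 2)) \<Otimes>\<^sub>M Lap (7 / (\<epsilon> / 2)))
           (borel \<Otimes>\<^sub>M borel \<Otimes>\<^sub>M borel)
           (\<lambda>(z1, z2). let a = SSA k D + z1; e = SSE k D + z2
                       in ((a / (real k - 1)) / (e / (real n - real k)), a, e))"

definition differentially_private ::
  "real \<Rightarrow> (database \<Rightarrow> bool) \<Rightarrow> (database \<Rightarrow> 'b measure) \<Rightarrow> 'b measure \<Rightarrow> bool" where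
  "differentially_private \<epsilon> valid f R \<longleftrightarrow>
     (\<forall>D D'. valid D \<longrightarrow> valid D' \<longrightarrow> neighboring D D' \<longrightarrow>
        (\<forall>S \<in> sets R. measure (f D) S \<le> exp \<epsilon> * measure (f D') S))"

end

theory Submission
  imports Defs
begin


lemma sets_Lap[measurable_cong, simp]: "sets (Lap b) = sets borel"
  by (simp add: Lap_def)
lemma space_Lap[simp]: "space (Lap b) = UNIV"
  by (simp add: Lap_def)

lemma lap_le: assumes "b > 0"
  shows "laplace_density b x \<le> exponential_density (1/b) x + exponential_density (1/b) (-x)"
  using assms by (auto simp: laplace_density_def exponential_density_def field_simps)

lemma finite_Lap: assumes b: "b > 0" shows "finite_measure (Lap b)"
proof
  have e1: "(\<integral>\<^sup>+x. ennreal (exponential_density (1/b) x) \<partial>lborel) = 1"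
    using prob_space.emeasure_space_1[OF prob_space_exponential_density[of "1/b"]] b
    by (simp add: emeasure_density)
  have e2: "(\<integral>\<^sup>+x. ennreal (exponential_density (1/b) (-x)) \<partial>lborel) = 1"
    using nn_integral_real_affine[of "\<lambda>x. ennreal (exponential_density (1/b) x)" "-1" 0] e1
    by simp
  have "emeasure (Lap b) (space (Lap b)) = (\<integral>\<^sup>+x. ennreal (laplace_density b x) \<partial>lborel)"
    by (simp add: Lap_def emeasure_density laplace_density_def)
  also have "\<dots> \<le> (\<integral>\<^sup>+x. ennreal (exponential_density (1/b) x) + ennreal (exponential_density (1/b) (-x)) \<partial>lborel)"
    apply (rule nn_integral_mono)
    using lap_le[OF b] b by (simp add: ennreal_plus[symmetric] exponential_density_def del: ennreal_plus)
  also have "\<dots> = 2"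
    by (subst nn_integral_add) (auto simp: e1 e2)
  finally show "emeasure (Lap b) (space (Lap b)) \<noteq> \<infinity>"
    by (metis ennreal_numeral_less_top infinity_ennreal_def leD)
qed

lemma lap_ratio: assumes b: "b > 0"
  shows "laplace_density b (v - E) \<le> exp (\<bar>E - E'\<bar> / b) * laplace_density b (v - E')"
proof -
  have "- \<bar>v - E\<bar> / b \<le> \<bar>E - E'\<bar> / b + - \<bar>v - E'\<bar> / b"
    using b by (simp add: field_simps)
  hence "exp (- \<bar>v - E\<bar> / b) \<le> exp (\<bar>E - E'\<bar> / b) * exp (- \<bar>v - E'\<bar> / b)"
    by (simp add: exp_add[symmetric])
  thus ?thesis using b unfolding laplace_density_def
    by (simp add: divide_right_mono mult.assoc times_divide_eq_right)
qed

lemma lap_shift: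
  assumes b: "b > 0" and h[measurable]: "h \<in> borel_measurable borel"
  shows "(\<integral>\<^sup>+y. h (E + y) \<partial>Lap b) \<le> ennreal (exp (\<bar>E - E'\<bar> / b)) * (\<integral>\<^sup>+y. h (E' + y) \<partial>Lap b)"
proof -
  have tr: "(\<integral>\<^sup>+y. h (F + y) \<partial>Lap b) = (\<integral>\<^sup>+v. ennreal (laplace_density b (v - F)) * h v \<partial>lborel)" for F
  proof -
    have "(\<integral>\<^sup>+y. h (F + y) \<partial>Lap b) = (\<integral>\<^sup>+y. ennreal (laplace_density b y) * h (F + y) \<partial>lborel)"
      unfolding Lap_def by (subst nn_integral_density) (auto simp: laplace_density_def)
    also have "\<dots> = (\<integral>\<^sup>+v. ennreal (laplace_density b (v - F)) * h v \<partial>lborel)"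
      using nn_integral_real_affine[of "\<lambda>v. ennreal (laplace_density b (v - F)) * h v" 1 F]
      by (simp add: laplace_density_def)
    finally show ?thesis .
  qed
  have "(\<integral>\<^sup>+v. ennreal (laplace_density b (v - E)) * h v \<partial>lborel)
      \<le> (\<integral>\<^sup>+v. ennreal (exp (\<bar>E - E'\<bar> / b)) * (ennreal (laplace_density b (v - E')) * h v) \<partial>lborel)"
  proof (rule nn_integral_mono)
    fix v
    have "ennreal (laplace_density b (v - E)) \<le> ennreal (exp (\<bar>E - E'\<bar> / b)) * ennreal (laplace_density b (v - E'))"
      using lap_ratio[OF b, of v E E'] b
      by (simp add: ennreal_mult[symmetric] laplace_density_def)
    thus "ennreal (laplace_density b (v - E)) * h v \<le> ennreal (exp (\<bar>E - E'\<bar> / b)) * (ennreal (laplace_density b (v - E')) * h v)"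
      by (metis mult.assoc mult_right_mono zero_le)
  qed
  also have "\<dots> = ennreal (exp (\<bar>E - E'\<bar> / b)) * (\<integral>\<^sup>+v. ennreal (laplace_density b (v - E')) * h v \<partial>lborel)"
    by (rule nn_integral_cmult) (auto simp: laplace_density_def)
  finally show ?thesis by (simp add: tr)
qed

lemma mech_bound:
  assumes b1: "b1 > 0" and b2: "b2 > 0"
    and g[measurable]: "g \<in> (borel \<Otimes>\<^sub>M borel) \<rightarrow>\<^sub>M R" and S[measurable]: "S \<in> sets R"
  shows "emeasure (distr (Lap b1 \<Otimes>\<^sub>M Lap b2) R (\<lambda>z. g (A + fst z, E + snd z))) S
     \<le> ennreal (exp (\<bar>A - A'\<bar> / b1 + \<bar>E - E'\<bar> / b2)) *
        emeasure (distr (Lap b1 \<Otimes>\<^sub>M Lap b2) R (\<lambda>z. g (A' + fst z, E' + snd z))) S"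
proof -
  interpret L2: finite_measure "Lap b2" by (rule finite_Lap[OF b2])
  define H where "H u v = (indicator S (g (u, v)) :: ennreal)" for u v
  have Hm[measurable]: "(\<lambda>(u,v). H u v) \<in> borel_measurable (borel \<Otimes>\<^sub>M borel)"
    unfolding H_def by measurable
  have Hm1[measurable]: "H u \<in> borel_measurable borel" for u
    unfolding H_def by measurable
  have eq: "emeasure (distr (Lap b1 \<Otimes>\<^sub>M Lap b2) R (\<lambda>z. g (A0 + fst z, E0 + snd z))) S
     = (\<integral>\<^sup>+x. \<integral>\<^sup>+y. H (A0 + x) (E0 + y) \<partial>Lap b2 \<partial>Lap b1)" for A0 E0
  proof -
    have m: "(\<lambda>z. g (A0 + fst z, E0 + snd z)) \<in> (Lap b1 \<Otimes>\<^sub>M Lap b2) \<rightarrow>\<^sub>M R"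
      by measurable
    have "emeasure (distr (Lap b1 \<Otimes>\<^sub>M Lap b2) R (\<lambda>z. g (A0 + fst z, E0 + snd z))) S
       = (\<integral>\<^sup>+x. indicator S x \<partial>distr (Lap b1 \<Otimes>\<^sub>M Lap b2) R (\<lambda>z. g (A0 + fst z, E0 + snd z)))"
      by (simp add: nn_integral_indicator)
    also have "\<dots> = (\<integral>\<^sup>+z. H (A0 + fst z) (E0 + snd z) \<partial>(Lap b1 \<Otimes>\<^sub>M Lap b2))"
      by (subst nn_integral_distr[OF m]) (auto simp: H_def)
    also have "\<dots> = (\<integral>\<^sup>+x. \<integral>\<^sup>+y. H (A0 + x) (E0 + y) \<partial>Lap b2 \<partial>Lap b1)"
      by (subst L2.nn_integral_fst[symmetric]) (auto simp: split_beta')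
    finally show ?thesis .
  qed
  define K where "K u = (\<integral>\<^sup>+y. H u (E' + y) \<partial>Lap b2)" for u
  have Km[measurable]: "K \<in> borel_measurable borel"
    unfolding K_def by measurable
  have "(\<integral>\<^sup>+x. \<integral>\<^sup>+y. H (A + x) (E + y) \<partial>Lap b2 \<partial>Lap b1)
      \<le> (\<integral>\<^sup>+x. ennreal (exp (\<bar>E - E'\<bar> / b2)) * K (A + x) \<partial>Lap b1)"
    unfolding K_def by (rule nn_integral_mono) (rule lap_shift[OF b2], measurable)
  also have "\<dots> = ennreal (exp (\<bar>E - E'\<bar> / b2)) * (\<integral>\<^sup>+x. K (A + x) \<partial>Lap b1)"
    by (rule nn_integral_cmult) measurable
  also have "\<dots> \<le> ennreal (exp (\<bar>E - E'\<bar> / b2)) * (ennreal (exp (\<bar>A - A'\<bar> / b1)) * (\<integral>\<^sup>+x. K (A' + x) \<partial>Lap b1))"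
    by (rule mult_left_mono) (auto intro: lap_shift[OF b1])
  also have "\<dots> = ennreal (exp (\<bar>A - A'\<bar> / b1 + \<bar>E - E'\<bar> / b2)) * (\<integral>\<^sup>+x. K (A' + x) \<partial>Lap b1)"
    by (simp add: exp_add ennreal_mult mult.assoc mult.commute mult.left_commute)
  finally show ?thesis unfolding eq K_def .
qed



definition cnt :: "(nat \<times> real \<Rightarrow> bool) \<Rightarrow> database \<Rightarrow> real" where
  "cnt P D = (\<Sum>t<length D. if P (D!t) then 1 else 0)"
definition s1 :: "(nat \<times> real \<Rightarrow> bool) \<Rightarrow> database \<Rightarrow> real" where
  "s1 P D = (\<Sum>t<length D. if P (D!t) then snd (D!t) else 0)"
definition s2 :: "(nat \<times> real \<Rightarrow> bool) \<Rightarrow> database \<Rightarrow> real" where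
  "s2 P D = (\<Sum>t<length D. if P (D!t) then (snd (D!t))^2 else 0)"
definition ssq :: "(nat \<times> real \<Rightarrow> bool) \<Rightarrow> database \<Rightarrow> real" where
  "ssq P D = s2 P D - (s1 P D)^2 / cnt P D"

lemma sl_filter: "sum_list (map f (filter P D)) = (\<Sum>t<length D. if P (D!t) then f (D!t) else (0::real))"
proof -
  have "sum_list (map f (filter P D)) = sum_list (map (\<lambda>x. if P x then f x else 0) D)"
    by (rule sum_list_map_filter')
  also have "\<dots> = (\<Sum>t<length (map (\<lambda>x. if P x then f x else 0) D). (map (\<lambda>x. if P x then f x else 0) D) ! t)"
    by (simp only: sum_list_sum_nth atLeast0LessThan)
  also have "\<dots> = (\<Sum>t<length D. if P (D!t) then f (D!t) else (0::real))"
    by (rule sum.cong) auto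
  finally show ?thesis .
qed

lemma len_filter: "real (length (filter P D)) = cnt P D"
proof -
  have "real (length (filter P D)) = sum_list (map (\<lambda>x. if P x then 1 else 0) D)"
    by (induct D) auto
  thus ?thesis by (simp add: cnt_def sum_list_sum_nth atLeast0LessThan)
qed

lemma gc: "real (group_count D i) = cnt (\<lambda>r. fst r = i) D"
  by (simp add: group_count_def len_filter)

lemma gm: "group_mean D i = s1 (\<lambda>r. fst r = i) D / cnt (\<lambda>r. fst r = i) D"
  by (simp add: group_mean_def gc sl_filter s1_def)

lemma inner_sq: "sum_list (map (\<lambda>r. (snd r - s1 P D / cnt P D)^2) (filter P D)) = ssq P D"
proof -
  define m where "m = s1 P D / cnt P D"
  have "sum_list (map (\<lambda>r. (snd r - m)^2) (filter P D))
      = (\<Sum>t<length D. (if P (D!t) then (snd (D!t))^2 else 0) - 2 * m * (if P (D!t) then snd (D!t) else 0)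
            + m^2 * (if P (D!t) then 1 else 0))"
    unfolding sl_filter by (rule sum.cong) (auto simp: power2_eq_square algebra_simps)
  also have "\<dots> = s2 P D - 2 * m * s1 P D + m^2 * cnt P D"
    by (simp add: sum.distrib sum_subtractf sum_distrib_left s1_def s2_def cnt_def)
  also have "\<dots> = ssq P D"
    by (cases "cnt P D = 0") (simp_all add: ssq_def m_def power2_eq_square field_simps)
  finally show ?thesis by (simp add: m_def)
qed

lemma SSE_eq: "SSE k D = (\<Sum>i=1..k. ssq (\<lambda>r. fst r = i) D)"
  unfolding SSE_def gm using inner_sq by simp

lemma s1_bounds:
  assumes "\<forall>r\<in>set D. snd r \<in> {0..1}"
  shows "0 \<le> s1 P D \<and> s1 P D \<le> cnt P D"
proof -
  have y: "0 \<le> snd (D!t) \<and> snd (D!t) \<le> 1" if "t < length D" for t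
    using assms that nth_mem by fastforce
  show ?thesis unfolding s1_def cnt_def
    by (auto intro!: sum_nonneg sum_mono simp: y)
qed

lemma sum_groups:
  fixes D :: database
  assumes "\<forall>t<length D. fst (D!t) \<in> {1..k}"
  shows "(\<Sum>i=1..k. (\<Sum>t<length D. if fst (D!t) = i then f t else (0::real))) = (\<Sum>t<length D. f t)"
proof -
  have "(\<Sum>i=1..k. if fst (D!t) = i then f t else (0::real)) = f t" if "t < length D" for t
  proof -
    have m: "fst (D!t) \<in> {1..k}" using assms that by blast
    show ?thesis using m by simp
  qed
  then show ?thesis by (subst sum.swap) simp
qed

lemma SST_eq:
  assumes v: "valid_db k n D" and n: "n > 0"
  shows "SSA k D + SSE k D = ssq (\<lambda>_. True) D"
proof -
  have lenD: "length D = n" using v by (simp add: valid_db_def)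
  have lab: "\<forall>t<length D. fst (D!t) \<in> {1..k}" using v nth_mem unfolding valid_db_def by blast
  have ys: "\<forall>r\<in>set D. snd r \<in> {0..1}" using v by (simp add: valid_db_def)
  define M where "M = grand_mean D"
  define c where "c i = cnt (\<lambda>r. fst r = i) D" for i
  define a where "a i = s1 (\<lambda>r. fst r = i) D" for i
  define q where "q i = s2 (\<lambda>r. fst r = i) D" for i
  have trm: "real (group_count D i) * (group_mean D i - M)^2 + ssq (\<lambda>r. fst r = i) D
        = q i - 2 * M * a i + M^2 * c i" for i
  proof (cases "c i = 0")
    case True
    then have "a i = 0" using s1_bounds[OF ys, of "\<lambda>r. fst r = i"] by (simp add: a_def c_def)
    with True show ?thesis by (simp add: gc gm ssq_def a_def c_def q_def)
  next
    case False
    then show ?thesis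
      by (simp add: gc gm ssq_def a_def[symmetric] c_def[symmetric] q_def[symmetric] power2_eq_square field_simps)
  qed
  have "SSA k D + SSE k D = (\<Sum>i=1..k. q i - 2 * M * a i + M^2 * c i)"
    unfolding SSA_def SSE_eq M_def[symmetric] sum.distrib[symmetric] using trm by simp
  also have "\<dots> = (\<Sum>i=1..k. q i) - 2 * M * (\<Sum>i=1..k. a i) + M^2 * (\<Sum>i=1..k. c i)"
    by (simp add: sum.distrib sum_subtractf sum_distrib_left)
  also have "(\<Sum>i=1..k. q i) = s2 (\<lambda>_. True) D"
    unfolding q_def s2_def using sum_groups[OF lab] by simp
  also have "(\<Sum>i=1..k. a i) = s1 (\<lambda>_. True) D"
    unfolding a_def s1_def using sum_groups[OF lab] by simp
  also have "(\<Sum>i=1..k. c i) = cnt (\<lambda>_. True) D"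
    unfolding c_def cnt_def using sum_groups[OF lab, of "\<lambda>_. 1"] by simp
  also have "cnt (\<lambda>_. True) D = real n" by (simp add: cnt_def lenD)
  also have "M = s1 (\<lambda>_. True) D / real n"
    by (simp add: M_def grand_mean_def s1_def lenD sum_list_sum_nth atLeast0LessThan)
  finally show ?thesis using n
    by (simp add: ssq_def cnt_def lenD power2_eq_square field_simps)
qed

lemma add_point:
  fixes u c y w :: real
  assumes "0 \<le> u" "u \<le> c" "0 \<le> y" "y \<le> 1"
  shows "0 \<le> ((w + y^2) - (u + y)^2 / (c + 1)) - (w - u^2 / c)
       \<and> ((w + y^2) - (u + y)^2 / (c + 1)) - (w - u^2 / c) \<le> 1"
proof (cases "c = 0")
  case True
  then have "u = 0" using assms by simp
  with True show ?thesis by simp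
next
  case False
  then have c: "c > 0" using assms by simp
  have a1: "(u+y)^2/(c+1) * (c*(c+1)) = c*(u+y)^2" using c by simp
  have a2: "u^2/c * (c*(c+1)) = (c+1)*u^2" using c by simp
  have l: "((w + y^2) - (u + y)^2 / (c + 1)) - (w - u^2 / c) = y^2 - (u+y)^2/(c+1) + u^2/c" by simp
  have "(y^2 - (u+y)^2/(c+1) + u^2/c) * (c*(c+1)) = y^2 * (c*(c+1)) - (u+y)^2/(c+1) * (c*(c+1)) + u^2/c * (c*(c+1))"
    by (simp only: ring_distribs)
  also have "\<dots> = (c*y - u)^2" unfolding a1 a2 by (simp add: power2_eq_square algebra_simps)
  finally have h: "(y^2 - (u+y)^2/(c+1) + u^2/c) * (c*(c+1)) = (c*y - u)^2" .
  have eq: "((w + y^2) - (u + y)^2 / (c + 1)) - (w - u^2 / c) = (c*y - u)^2 / (c * (c+1))"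
    unfolding l using h c by (simp add: eq_divide_eq)
  have cy1: "c * y \<le> c * 1" using assms c by (intro mult_left_mono) auto
  have cy0: "0 \<le> c * y" using assms c by simp
  have "\<bar>c*y - u\<bar> \<le> c" using cy1 cy0 assms unfolding abs_le_iff by linarith
  then have "(c*y - u)^2 \<le> c^2"
    by (metis abs_ge_zero power2_abs power_mono)
  also have "\<dots> \<le> c * (c+1)" using c by (simp add: power2_eq_square algebra_simps)
  finally have "(c*y - u)^2 / (c * (c+1)) \<le> 1" using c by simp
  thus ?thesis unfolding eq using c by simp
qed

lemma split_sum:
  fixes n :: nat
  assumes "j < n"
  shows "(\<Sum>t<n. f t) = (\<Sum>t\<in>{..<n}-{j}. f t) + (f j :: real)"
  by (subst sum.remove[of "{..<n}" j]) (use assms in auto)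

lemma ssq_step:
  assumes ys: "\<forall>r\<in>set D. snd r \<in> {0..1}" and j: "j < length D"
  defines "J \<equiv> {..<length D} - {j}"
  shows "0 \<le> ssq P D - ((\<Sum>t\<in>J. if P (D!t) then (snd (D!t))^2 else 0)
            - (\<Sum>t\<in>J. if P (D!t) then snd (D!t) else 0)^2 / (\<Sum>t\<in>J. if P (D!t) then 1 else 0))
    \<and> ssq P D - ((\<Sum>t\<in>J. if P (D!t) then (snd (D!t))^2 else 0)
            - (\<Sum>t\<in>J. if P (D!t) then snd (D!t) else 0)^2 / (\<Sum>t\<in>J. if P (D!t) then 1 else 0)) \<le> 1
    \<and> (\<not> P (D!j) \<longrightarrow> ssq P D = ((\<Sum>t\<in>J. if P (D!t) then (snd (D!t))^2 else 0)
            - (\<Sum>t\<in>J. if P (D!t) then snd (D!t) else 0)^2 / (\<Sum>t\<in>J. if P (D!t) then 1 else 0)))"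
proof -
  have y: "0 \<le> snd (D!t) \<and> snd (D!t) \<le> 1" if "t < length D" for t
    using ys that nth_mem by fastforce
  define c where "c = (\<Sum>t\<in>J. if P (D!t) then 1 else (0::real))"
  define s where "s = (\<Sum>t\<in>J. if P (D!t) then snd (D!t) else 0)"
  define q where "q = (\<Sum>t\<in>J. if P (D!t) then (snd (D!t))^2 else 0)"
  have e1: "0 \<le> (if P (D!t) then snd (D!t) else 0)" if "t < length D" for t
    using y[OF that] by auto
  have e2: "(if P (D!t) then snd (D!t) else 0) \<le> (if P (D!t) then 1 else (0::real))" if "t < length D" for t
    using y[OF that] by auto
  have sc: "0 \<le> s \<and> s \<le> c" unfolding s_def c_def J_def
    by (auto intro!: sum_nonneg sum_mono e1 e2)
  have "cnt P D = c + (if P (D!j) then 1 else 0)"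
    unfolding cnt_def c_def J_def by (rule split_sum[OF j])
  moreover have "s1 P D = s + (if P (D!j) then snd (D!j) else 0)"
    unfolding s1_def s_def J_def by (rule split_sum[OF j])
  moreover have "s2 P D = q + (if P (D!j) then (snd (D!j))^2 else 0)"
    unfolding s2_def q_def J_def by (rule split_sum[OF j])
  ultimately show ?thesis
    using add_point[of s c "snd (D!j)" q] sc y[OF j]
    unfolding c_def[symmetric] s_def[symmetric] q_def[symmetric]
    by (auto simp: ssq_def)
qed

lemma ssq_sens:
  assumes ys: "\<forall>r\<in>set D. snd r \<in> {0..1}" and ys': "\<forall>r\<in>set D'. snd r \<in> {0..1}"
    and len: "length D' = length D" and j: "j < length D"
    and same: "\<forall>t<length D. t \<noteq> j \<longrightarrow> D!t = D'!t"
  shows "\<bar>ssq P D - ssq P D'\<bar> \<le> 1 \<and> (\<not> P (D!j) \<and> \<not> P (D'!j) \<longrightarrow> ssq P D = ssq P D')"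
proof -
  define J where "J = {..<length D} - {j}"
  have eqJ: "(\<Sum>t\<in>J. f (D!t)) = (\<Sum>t\<in>J. f (D'!t))" for f :: "nat \<times> real \<Rightarrow> real"
    by (rule sum.cong) (auto simp: J_def same)
  show ?thesis
    using ssq_step[OF ys j, of P] ssq_step[OF ys', of j P] len j
    unfolding J_def[symmetric] len
    by (simp add: eqJ[of "\<lambda>r. if P r then (snd r)^2 else 0"] eqJ[of "\<lambda>r. if P r then snd r else 0"]
        eqJ[of "\<lambda>r. if P r then 1 else 0"] abs_le_iff)
qed



lemma neighbor_obtain:
  assumes "neighboring D D'"
  obtains j where "j < length D" "\<forall>t<length D. t \<noteq> j \<longrightarrow> D!t = D'!t"
proof -
  from assms have c: "card {j. j < length D \<and> D ! j \<noteq> D' ! j} = 1"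
    unfolding neighboring_def by (rule conjunct2)
  then obtain j where j: "{j. j < length D \<and> D ! j \<noteq> D' ! j} = {j}"
    by (rule card_1_singletonE)
  then have "j < length D" by blast
  moreover have "\<forall>t<length D. t \<noteq> j \<longrightarrow> D!t = D'!t" using j by blast
  ultimately show ?thesis using that by blast
qed

lemma sens:
  assumes v: "valid_db k n D" and v': "valid_db k n D'" and nb: "neighboring D D'" and n: "n > 0"
  shows "\<bar>SSE k D - SSE k D'\<bar> \<le> 2 \<and> \<bar>SSA k D - SSA k D'\<bar> \<le> 3"
proof -
  obtain j where j: "j < length D" and same: "\<forall>t<length D. t \<noteq> j \<longrightarrow> D!t = D'!t"
    using neighbor_obtain[OF nb] by blast
  have len: "length D' = length D" using v v' by (simp add: valid_db_def)
  have ys: "\<forall>r\<in>set D. snd r \<in> {0..1}" and ys': "\<forall>r\<in>set D'. snd r \<in> {0..1}"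
    using v v' by (auto simp: valid_db_def)
  note S = ssq_sens[OF ys ys' len j same]
  define G where "G = {fst (D!j), fst (D'!j)}"
  have bi: "\<bar>ssq (\<lambda>r. fst r = i) D - ssq (\<lambda>r. fst r = i) D'\<bar> \<le> (if i \<in> G then 1 else 0)" for i
    using S[of "\<lambda>r. fst r = i"] by (auto simp: G_def)
  have "\<bar>SSE k D - SSE k D'\<bar> = \<bar>\<Sum>i=1..k. ssq (\<lambda>r. fst r = i) D - ssq (\<lambda>r. fst r = i) D'\<bar>"
    by (simp add: SSE_eq sum_subtractf)
  also have "\<dots> \<le> (\<Sum>i=1..k. \<bar>ssq (\<lambda>r. fst r = i) D - ssq (\<lambda>r. fst r = i) D'\<bar>)"
    by (rule sum_abs)
  also have "\<dots> \<le> (\<Sum>i=1..k. if i \<in> G then 1 else (0::real))"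
    by (rule sum_mono) (rule bi)
  also have "\<dots> = real (card ({1..k} \<inter> G))"
    using sum.inter_restrict[of "{1..k}" "\<lambda>_. 1::real" G] by simp
  also have "\<dots> \<le> 2"
  proof -
    have "card ({1..k} \<inter> G) \<le> card G" by (rule card_mono) (auto simp: G_def)
    also have "card G \<le> 2" by (simp add: G_def card_insert_if)
    finally show ?thesis by simp
  qed
  finally have e: "\<bar>SSE k D - SSE k D'\<bar> \<le> 2" .
  have t: "\<bar>ssq (\<lambda>_. True) D - ssq (\<lambda>_. True) D'\<bar> \<le> 1" using S by blast
  have "SSA k D = ssq (\<lambda>_. True) D - SSE k D" using SST_eq[OF v n] by simp
  moreover have "SSA k D' = ssq (\<lambda>_. True) D' - SSE k D'" using SST_eq[OF v' n] by simp
  ultimately have "\<bar>SSA k D - SSA k D'\<bar> \<le> 3" using e t by (simp add: abs_le_iff)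
  with e show ?thesis by simp
qed

theorem mainTheorem3:
  fixes \<epsilon> :: real and k n :: nat
  assumes "\<epsilon> > 0" and "k \<ge> 2" and "n > k"
  shows "differentially_private \<epsilon> (valid_db k n) (anova_mech \<epsilon> k n)
           (borel \<Otimes>\<^sub>M borel \<Otimes>\<^sub>M borel)"
proof -
  define b1 where "b1 = (9 + 5 / real n) / (\<epsilon> / 2)"
  define b2 where "b2 = 7 / (\<epsilon> / 2)"
  have "0 < 9 + 5 / real n" by (simp add: add_pos_nonneg)
  then have b1: "b1 > 0" and b2: "b2 > 0" using assms unfolding b1_def b2_def
    by (auto intro: divide_pos_pos)
  define gg :: "real \<times> real \<Rightarrow> real \<times> real \<times> real" where
    "gg = (\<lambda>(a, e). ((a / (real k - 1)) / (e / (real n - real k)), a, e))"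
  have gm[measurable]: "gg \<in> (borel \<Otimes>\<^sub>M borel) \<rightarrow>\<^sub>M (borel \<Otimes>\<^sub>M borel \<Otimes>\<^sub>M borel)"
    unfolding gg_def by measurable
  have mech: "anova_mech \<epsilon> k n D = distr (Lap b1 \<Otimes>\<^sub>M Lap b2) (borel \<Otimes>\<^sub>M borel \<Otimes>\<^sub>M borel)
      (\<lambda>z. gg (SSA k D + fst z, SSE k D + snd z))" for D
    unfolding anova_mech_def b1_def b2_def gg_def
    by (rule arg_cong[where f="distr _ _"]) (auto simp: fun_eq_iff Let_def)
  have fin: "finite_measure (anova_mech \<epsilon> k n D)" for D
  proof -
    interpret P: finite_measure "Lap b1 \<Otimes>\<^sub>M Lap b2"
      by (rule finite_measure_pair_measure[OF finite_Lap[OF b2] finite_Lap[OF b1]])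
    show ?thesis unfolding mech by (rule P.finite_measure_distr) measurable
  qed
  show ?thesis unfolding differentially_private_def
  proof (intro allI impI ballI)
    fix D D' and S :: "(real \<times> real \<times> real) set"
    assume v: "valid_db k n D" and v': "valid_db k n D'" and nb: "neighboring D D'"
      and S: "S \<in> sets (borel \<Otimes>\<^sub>M borel \<Otimes>\<^sub>M borel)"
    have n0: "n > 0" using assms by simp
    note sn = sens[OF v v' nb n0]
    define c where "c = exp (\<bar>SSA k D - SSA k D'\<bar> / b1 + \<bar>SSE k D - SSE k D'\<bar> / b2)"
    have c1: "\<bar>SSA k D - SSA k D'\<bar> / b1 \<le> \<epsilon> / 2"
    proof -
      have "0 \<le> 5 / real n" by simp
      then have "\<bar>SSA k D - SSA k D'\<bar> \<le> 9 + 5 / real n" using sn by linarith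
      moreover have Bp: "0 < 9 + 5 / real n" by (simp add: add_pos_nonneg)
      ultimately have r: "\<bar>SSA k D - SSA k D'\<bar> / (9 + 5 / real n) \<le> 1" by simp
      have "\<bar>SSA k D - SSA k D'\<bar> / b1 = (\<epsilon> / 2) * (\<bar>SSA k D - SSA k D'\<bar> / (9 + 5 / real n))"
        unfolding b1_def by simp
      also have "\<dots> \<le> \<epsilon> / 2" using r assms by (intro mult_left_le) auto
      finally show ?thesis .
    qed
    have c2: "\<bar>SSE k D - SSE k D'\<bar> / b2 \<le> \<epsilon> / 2"
      using sn b2 assms unfolding b2_def by (simp add: field_simps)
    have cle: "c \<le> exp \<epsilon>" unfolding c_def exp_le_cancel_iff using c1 c2 by linarith
    have "emeasure (anova_mech \<epsilon> k n D) S \<le> ennreal c * emeasure (anova_mech \<epsilon> k n D') S"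
      unfolding mech c_def by (rule mech_bound[OF b1 b2 gm S])
    then have "ennreal (measure (anova_mech \<epsilon> k n D) S) \<le> ennreal (c * measure (anova_mech \<epsilon> k n D') S)"
      using fin by (simp add: finite_measure.emeasure_eq_measure ennreal_mult c_def)
    then have "measure (anova_mech \<epsilon> k n D) S \<le> c * measure (anova_mech \<epsilon> k n D') S"
      by (simp add: c_def)
    also have "\<dots> \<le> exp \<epsilon> * measure (anova_mech \<epsilon> k n D') S"
      by (rule mult_right_mono[OF cle]) simp
    finally show "measure (anova_mech \<epsilon> k n D) S \<le> exp \<epsilon> * measure (anova_mech \<epsilon> k n D') S" .
  qed
qed


end
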